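(* If $\mathbf{H}=(H,\le,\wedge,\vee,0,1,\to)$ is a Heyting algebra, then its canonical frame $(X,\perp,Y,T)$ is a Heyting frame.
   Context: The canonical frame of $\mathbf H$: $X$ is the set of filters of $\mathbf H$, $Y$ the set of ideals, $x\perp y$ iff $x\cap y\neq\emptyset$; for $x\in X,v\in Y$, $x\leadsto v$ is the ideal generated by $\{a\to b:a\in x,b\in v\}$, and $yTxv$ iff $x\leadsto v\subseteq y$. General notions: $U'=\{y:\forall x\in U\ x\perp y\}$ for $U\subseteq X$, ${}'V=\{x:\forall y\in V\ x\perp y\}$ for $V\subseteq Y$; $A\subseteq X$ is stable if $A={}'(A')$, $B\subseteq Y$ co-stable if $B=({}'B)'$. Preorders: $x\le z$ iff $\{x\}'\subseteq\{z\}'$; $y\le v$ iff ${}'\{y\}\subseteq{}'\{v\}$; separated means both are partial orders; $\Gamma u$ is the set of elements above $u$. $T'\subseteq X\times X\times Y$: $uT'xv$ iff $\forall y(yTxv\Rightarrow u\perp y)$. An implicative frame is $(X,\perp,Y,T)$ with: (F0) $x\perp y$ iff $uT'xy$ for all $u\in X$; (F1) separated; (F2) each $\{y:yTxv\}$ equals $\Gamma w$ for some $w\in Y$; (F3) if $yTxv$, $x_1\le x$, $v_1\le v$ then $yTx_1v_1$; (F4) for all $u,x\in X,v\in Y$, $\{x_1:uT'x_1v\}$ is stable and $\{v_1:uT'xv_1\}$ is co-stable. Derived relations: $vR^{\partial11}zx$ iff $xT'zv$; $uR^{111}zx$ iff $\forall v\in Y(vR^{\partial11}zx\Rightarrow u\perp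 v)$. Upper bound relation: $uR_\le xz$ iff $x\le u$ and $z\le u$. A Heyting frame is an implicative frame with $\{u:uR^{111}xz\}=\{u:uR_\le xz\}$ for all $x,z\in X$. *)

theory Defs
  imports Main
begin

text \<open>The carrier H is the whole type.\<close>

definition heyting_imp :: "('a::bounded_lattice \<Rightarrow> 'a \<Rightarrow> 'a) \<Rightarrow> bool" where
  "heyting_imp imp \<longleftrightarrow> (\<forall>a b c. c \<le> imp a b \<longleftrightarrow> inf c a \<le> b)"

definition lat_filter :: "'a::lattice set \<Rightarrow> bool" where
  "lat_filter F \<longleftrightarrow> F \<noteq> {} \<and> (\<forall>a\<in>F. \<forall>b. a \<le> b \<longrightarrow> b \<in> F) \<and> (\<forall>a\<in>F. \<forall>b\<in>F. inf a b \<in> F)"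

definition lat_ideal :: "'a::lattice set \<Rightarrow> bool" where
  "lat_ideal I \<longleftrightarrow> I \<noteq> {} \<and> (\<forall>a\<in>I. \<forall>b. b \<le> a \<longrightarrow> b \<in> I) \<and> (\<forall>a\<in>I. \<forall>b\<in>I. sup a b \<in> I)"

definition ideal_gen :: "'a::lattice set \<Rightarrow> 'a set" where
  "ideal_gen S = \<Inter>{I. lat_ideal I \<and> S \<subseteq> I}"

definition canX :: "'a::lattice set set" where
  "canX = {x. lat_filter x}"

definition canY :: "'a::lattice set set" where
  "canY = {y. lat_ideal y}"

definition can_perp :: "'a set \<Rightarrow> 'a set \<Rightarrow> bool" where
  "can_perp x y \<longleftrightarrow> x \<inter> y \<noteq> {}"

definition can_arrow :: "('a::lattice \<Rightarrow> 'a \<Rightarrow> 'a) \<Rightarrow> 'a set \<Rightarrow> 'a set \<Rightarrow> 'a set" where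
  "can_arrow imp x v = ideal_gen {imp a b | a b. a \<in> x \<and> b \<in> v}"

definition can_T :: "('a::lattice \<Rightarrow> 'a \<Rightarrow> 'a) \<Rightarrow> 'a set \<Rightarrow> 'a set \<Rightarrow> 'a set \<Rightarrow> bool" where
  "can_T imp y x v \<longleftrightarrow> can_arrow imp x v \<subseteq> y"

definition perpR :: "'y set \<Rightarrow> ('x \<Rightarrow> 'y \<Rightarrow> bool) \<Rightarrow> 'x set \<Rightarrow> 'y set" where
  "perpR Y perp U = {y\<in>Y. \<forall>x\<in>U. perp x y}"

definition perpL :: "'x set \<Rightarrow> ('x \<Rightarrow> 'y \<Rightarrow> bool) \<Rightarrow> 'y set \<Rightarrow> 'x set" where
  "perpL X perp V = {x\<in>X. \<forall>y\<in>V. perp x y}"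

definition stable :: "'x set \<Rightarrow> ('x \<Rightarrow> 'y \<Rightarrow> bool) \<Rightarrow> 'y set \<Rightarrow> 'x set \<Rightarrow> bool" where
  "stable X perp Y A \<longleftrightarrow> A \<subseteq> X \<and> A = perpL X perp (perpR Y perp A)"

definition costable :: "'x set \<Rightarrow> ('x \<Rightarrow> 'y \<Rightarrow> bool) \<Rightarrow> 'y set \<Rightarrow> 'y set \<Rightarrow> bool" where
  "costable X perp Y B \<longleftrightarrow> B \<subseteq> Y \<and> B = perpR Y perp (perpL X perp B)"

definition leX :: "('x \<Rightarrow> 'y \<Rightarrow> bool) \<Rightarrow> 'y set \<Rightarrow> 'x \<Rightarrow> 'x \<Rightarrow> bool" where
  "leX perp Y x z \<longleftrightarrow> perpR Y perp {x} \<subseteq> perpR Y perp {z}"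

definition leY :: "'x set \<Rightarrow> ('x \<Rightarrow> 'y \<Rightarrow> bool) \<Rightarrow> 'y \<Rightarrow> 'y \<Rightarrow> bool" where
  "leY X perp y v \<longleftrightarrow> perpL X perp {y} \<subseteq> perpL X perp {v}"

definition separated :: "'x set \<Rightarrow> ('x \<Rightarrow> 'y \<Rightarrow> bool) \<Rightarrow> 'y set \<Rightarrow> bool" where
  "separated X perp Y \<longleftrightarrow>
     (\<forall>x\<in>X. \<forall>z\<in>X. leX perp Y x z \<and> leX perp Y z x \<longrightarrow> x = z) \<and>
     (\<forall>y\<in>Y. \<forall>v\<in>Y. leY X perp y v \<and> leY X perp v y \<longrightarrow> y = v)"

definition GammaY :: "'x set \<Rightarrow> ('x \<Rightarrow> 'y \<Rightarrow> bool) \<Rightarrow> 'y set \<Rightarrow> 'y \<Rightarrow> 'y set" where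
  "GammaY X perp Y w = {y\<in>Y. leY X perp w y}"

definition Tprime :: "('x \<Rightarrow> 'y \<Rightarrow> bool) \<Rightarrow> 'y set \<Rightarrow> ('y \<Rightarrow> 'x \<Rightarrow> 'y \<Rightarrow> bool) \<Rightarrow> 'x \<Rightarrow> 'x \<Rightarrow> 'y \<Rightarrow> bool" where
  "Tprime perp Y T u x v \<longleftrightarrow> (\<forall>y\<in>Y. T y x v \<longrightarrow> perp u y)"

definition implicative_frame ::
  "'x set \<Rightarrow> ('x \<Rightarrow> 'y \<Rightarrow> bool) \<Rightarrow> 'y set \<Rightarrow> ('y \<Rightarrow> 'x \<Rightarrow> 'y \<Rightarrow> bool) \<Rightarrow> bool" where
  "implicative_frame X perp Y T \<longleftrightarrow>
     \<comment> \<open>(F0)\<close>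
     (\<forall>x\<in>X. \<forall>y\<in>Y. perp x y \<longleftrightarrow> (\<forall>u\<in>X. Tprime perp Y T u x y)) \<and>
     \<comment> \<open>(F1)\<close>
     separated X perp Y \<and>
     \<comment> \<open>(F2)\<close>
     (\<forall>x\<in>X. \<forall>v\<in>Y. \<exists>w\<in>Y. {y\<in>Y. T y x v} = GammaY X perp Y w) \<and>
     \<comment> \<open>(F3)\<close>
     (\<forall>y\<in>Y. \<forall>x\<in>X. \<forall>v\<in>Y. \<forall>x1\<in>X. \<forall>v1\<in>Y.
        T y x v \<and> leX perp Y x1 x \<and> leY X perp v1 v \<longrightarrow> T y x1 v1) \<and>
     \<comment> \<open>(F4)\<close>
     (\<forall>u\<in>X. \<forall>x\<in>X. \<forall>v\<in>Y.
        stable X perp Y {x1\<in>X. Tprime perp Y T u x1 v} \<and>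
        costable X perp Y {v1\<in>Y. Tprime perp Y T u x v1})"

definition Rd11 :: "('x \<Rightarrow> 'y \<Rightarrow> bool) \<Rightarrow> 'y set \<Rightarrow> ('y \<Rightarrow> 'x \<Rightarrow> 'y \<Rightarrow> bool) \<Rightarrow> 'y \<Rightarrow> 'x \<Rightarrow> 'x \<Rightarrow> bool" where
  "Rd11 perp Y T v z x \<longleftrightarrow> Tprime perp Y T x z v"

definition R111 :: "('x \<Rightarrow> 'y \<Rightarrow> bool) \<Rightarrow> 'y set \<Rightarrow> ('y \<Rightarrow> 'x \<Rightarrow> 'y \<Rightarrow> bool) \<Rightarrow> 'x \<Rightarrow> 'x \<Rightarrow> 'x \<Rightarrow> bool" where
  "R111 perp Y T u z x \<longleftrightarrow> (\<forall>v\<in>Y. Rd11 perp Y T v z x \<longrightarrow> perp u v)"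

definition Rle :: "('x \<Rightarrow> 'y \<Rightarrow> bool) \<Rightarrow> 'y set \<Rightarrow> 'x \<Rightarrow> 'x \<Rightarrow> 'x \<Rightarrow> bool" where
  "Rle perp Y u x z \<longleftrightarrow> leX perp Y x u \<and> leX perp Y z u"

definition heyting_frame ::
  "'x set \<Rightarrow> ('x \<Rightarrow> 'y \<Rightarrow> bool) \<Rightarrow> 'y set \<Rightarrow> ('y \<Rightarrow> 'x \<Rightarrow> 'y \<Rightarrow> bool) \<Rightarrow> bool" where
  "heyting_frame X perp Y T \<longleftrightarrow>
     implicative_frame X perp Y T \<and>
     (\<forall>x\<in>X. \<forall>z\<in>X. {u\<in>X. R111 perp Y T u x z} = {u\<in>X. Rle perp Y u x z})"

end

theory Submission
  imports Defs
begin

lemma filt_up: "lat_filter F \<Longrightarrow> a \<in> F \<Longrightarrow> a \<le> b \<Longrightarrow> b \<in> F"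
  unfolding lat_filter_def by blast
lemma filt_inf: "lat_filter F \<Longrightarrow> a \<in> F \<Longrightarrow> b \<in> F \<Longrightarrow> inf a b \<in> F"
  unfolding lat_filter_def by blast
lemma filt_top: "lat_filter (F :: 'a::bounded_lattice set) \<Longrightarrow> top \<in> F"
  unfolding lat_filter_def by (metis all_not_in_conv top_greatest)
lemma id_down: "lat_ideal I \<Longrightarrow> a \<in> I \<Longrightarrow> b \<le> a \<Longrightarrow> b \<in> I"
  unfolding lat_ideal_def by blast
lemma id_sup: "lat_ideal I \<Longrightarrow> a \<in> I \<Longrightarrow> b \<in> I \<Longrightarrow> sup a b \<in> I"
  unfolding lat_ideal_def by blast
lemma pr_ideal: "lat_ideal {b. b \<le> a}"
  unfolding lat_ideal_def by auto
lemma pr_filter: "lat_filter {b. a \<le> b}"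
  unfolding lat_filter_def by auto

lemma perpR_single: "perpR canY can_perp {x} = {y\<in>canY. x \<inter> y \<noteq> {}}"
  unfolding perpR_def can_perp_def by auto
lemma perpL_single: "perpL canX can_perp {y} = {x\<in>canX. x \<inter> y \<noteq> {}}"
  unfolding perpL_def can_perp_def by auto

lemma leX_iff:
  assumes "lat_filter z"
  shows "leX can_perp canY x z \<longleftrightarrow> x \<subseteq> z"
proof
  assume h: "leX can_perp canY x z"
  show "x \<subseteq> z"
  proof
    fix a assume a: "a \<in> x"
    have "{b. b \<le> a} \<in> perpR canY can_perp {x}"
      using a pr_ideal[of a] unfolding perpR_def can_perp_def canY_def by auto
    with h have "{b. b \<le> a} \<in> perpR canY can_perp {z}" unfolding leX_def by blast
    then obtain b where "b \<in> z" "b \<le> a" unfolding perpR_single by auto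
    then show "a \<in> z" using filt_up assms by blast
  qed
next
  assume "x \<subseteq> z" then show "leX can_perp canY x z"
    unfolding leX_def perpR_single by auto
qed

lemma leY_iff:
  assumes "lat_ideal v"
  shows "leY canX can_perp y v \<longleftrightarrow> y \<subseteq> v"
proof
  assume h: "leY canX can_perp y v"
  show "y \<subseteq> v"
  proof
    fix a assume a: "a \<in> y"
    have "{b. a \<le> b} \<in> perpL canX can_perp {y}"
      using a pr_filter[of a] unfolding perpL_def can_perp_def canX_def by auto
    with h have "{b. a \<le> b} \<in> perpL canX can_perp {v}" unfolding leY_def by blast
    then obtain b where "b \<in> v" "a \<le> b" unfolding perpL_single by auto
    then show "a \<in> v" using id_down assms by blast
  qed
next
  assume "y \<subseteq> v" then show "leY canX can_perp y v"
    unfolding leY_def perpL_single by auto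
qed

definition Dn :: "('a::lattice \<Rightarrow> 'a \<Rightarrow> 'a) \<Rightarrow> 'a set \<Rightarrow> 'a set \<Rightarrow> 'a set" where
  "Dn imp x v = {d. \<exists>a\<in>x. \<exists>b\<in>v. d \<le> imp a b}"

definition Fg :: "'a::lattice set \<Rightarrow> 'a set \<Rightarrow> 'a set" where
  "Fg u x = {b. \<exists>c\<in>u. \<exists>a\<in>x. inf c a \<le> b}"

lemma Fg_filter:
  assumes "lat_filter u" "lat_filter x"
  shows "lat_filter (Fg u x)"
  unfolding lat_filter_def
proof (intro conjI ballI allI impI)
  obtain c a where "c \<in> u" "a \<in> x" using assms unfolding lat_filter_def by (meson all_not_in_conv)
  then show "Fg u x \<noteq> {}" unfolding Fg_def by blast
next
  fix a b assume "a \<in> Fg u x" "a \<le> b" then show "b \<in> Fg u x"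
    unfolding Fg_def using order_trans by blast
next
  fix a b assume "a \<in> Fg u x" "b \<in> Fg u x"
  then obtain c1 a1 c2 a2 where h: "c1 \<in> u" "a1 \<in> x" "inf c1 a1 \<le> a"
    "c2 \<in> u" "a2 \<in> x" "inf c2 a2 \<le> b" unfolding Fg_def by blast
  have "inf (inf c1 c2) (inf a1 a2) \<le> inf c1 a1" by (rule inf_mono) simp_all
  moreover have "inf (inf c1 c2) (inf a1 a2) \<le> inf c2 a2" by (rule inf_mono) simp_all
  ultimately have "inf (inf c1 c2) (inf a1 a2) \<le> inf a b"
    using h(3,6) by (intro le_infI) (erule order_trans, assumption)+
  moreover have "inf c1 c2 \<in> u" "inf a1 a2 \<in> x" using h filt_inf assms by blast+
  ultimately show "inf a b \<in> Fg u x" unfolding Fg_def by blast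
qed

context
  fixes imp :: "'a::bounded_lattice \<Rightarrow> 'a \<Rightarrow> 'a"
  assumes H: "heyting_imp imp"
begin

lemma res: "c \<le> imp a b \<longleftrightarrow> inf c a \<le> b"
  using H unfolding heyting_imp_def by blast

lemma imp_mono: "c \<le> c1 \<Longrightarrow> b1 \<le> b \<Longrightarrow> imp c1 b1 \<le> imp c b"
proof -
  assume a: "c \<le> c1" "b1 \<le> b"
  have "inf (imp c1 b1) c1 \<le> b1" using res by blast
  moreover have "inf (imp c1 b1) c \<le> inf (imp c1 b1) c1" by (rule inf_mono) (simp_all add: a)
  ultimately have "inf (imp c1 b1) c \<le> b"
    using a by (meson order_trans)
  then show ?thesis using res by blast
qed

lemma Dn_ideal:
  assumes "lat_filter x" "lat_ideal v"
  shows "lat_ideal (Dn imp x v)"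
  unfolding lat_ideal_def
proof (intro conjI ballI allI impI)
  obtain a b where "a \<in> x" "b \<in> v" using assms unfolding lat_filter_def lat_ideal_def by (meson all_not_in_conv)
  then show "Dn imp x v \<noteq> {}" unfolding Dn_def by blast
next
  fix a b assume "a \<in> Dn imp x v" "b \<le> a" then show "b \<in> Dn imp x v"
    unfolding Dn_def using order_trans by blast
next
  fix d1 d2 assume "d1 \<in> Dn imp x v" "d2 \<in> Dn imp x v"
  then obtain a1 b1 a2 b2 where h: "a1 \<in> x" "b1 \<in> v" "d1 \<le> imp a1 b1"
    "a2 \<in> x" "b2 \<in> v" "d2 \<le> imp a2 b2" unfolding Dn_def by blast
  have "imp a1 b1 \<le> imp (inf a1 a2) (sup b1 b2)" "imp a2 b2 \<le> imp (inf a1 a2) (sup b1 b2)"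
    by (auto intro: imp_mono)
  then have "sup d1 d2 \<le> imp (inf a1 a2) (sup b1 b2)"
    using h(3,6) by (intro sup_least) (erule order_trans, assumption)+
  moreover have "inf a1 a2 \<in> x" "sup b1 b2 \<in> v" using h filt_inf id_sup assms by blast+
  ultimately show "sup d1 d2 \<in> Dn imp x v" unfolding Dn_def by blast
qed

lemma arrow_eq:
  assumes "lat_filter x" "lat_ideal v"
  shows "can_arrow imp x v = Dn imp x v"
proof -
  let ?S = "{imp a b | a b. a \<in> x \<and> b \<in> v}"
  have 1: "?S \<subseteq> Dn imp x v" unfolding Dn_def by auto
  have 2: "Dn imp x v \<subseteq> I" if "lat_ideal I" "?S \<subseteq> I" for I
  proof
    fix d assume "d \<in> Dn imp x v"
    then obtain a b where "a \<in> x" "b \<in> v" "d \<le> imp a b" unfolding Dn_def by blast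
    then show "d \<in> I" using that id_down by blast
  qed
  show ?thesis unfolding can_arrow_def ideal_gen_def
    using 1 2 Dn_ideal[OF assms] by blast
qed

lemma T_iff:
  assumes "lat_filter x" "lat_ideal v"
  shows "can_T imp y x v \<longleftrightarrow> Dn imp x v \<subseteq> y"
  unfolding can_T_def arrow_eq[OF assms] ..

lemma Tprime_iff:
  assumes "lat_filter u" "lat_filter x" "lat_ideal v"
  shows "Tprime can_perp canY (can_T imp) u x v \<longleftrightarrow> (\<exists>c\<in>u. \<exists>a\<in>x. \<exists>b\<in>v. inf c a \<le> b)"
proof
  assume "Tprime can_perp canY (can_T imp) u x v"
  then have "u \<inter> Dn imp x v \<noteq> {}"
    unfolding Tprime_def can_perp_def using T_iff[OF assms(2,3)] Dn_ideal[OF assms(2,3)]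
    unfolding canY_def by blast
  then show "\<exists>c\<in>u. \<exists>a\<in>x. \<exists>b\<in>v. inf c a \<le> b" unfolding Dn_def using res by blast
next
  assume "\<exists>c\<in>u. \<exists>a\<in>x. \<exists>b\<in>v. inf c a \<le> b"
  then have "u \<inter> Dn imp x v \<noteq> {}" unfolding Dn_def using res by blast
  then show "Tprime can_perp canY (can_T imp) u x v"
    unfolding Tprime_def can_perp_def using T_iff[OF assms(2,3)] by blast
qed

lemma Tprime_iff1:
  assumes "lat_filter u" "lat_filter x" "lat_ideal v"
  shows "Tprime can_perp canY (can_T imp) u x v \<longleftrightarrow> x \<inter> Dn imp u v \<noteq> {}"
proof -
  have e: "\<And>c a b. inf c a \<le> b \<longleftrightarrow> a \<le> imp c b" using res by (simp add: inf_commute)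
  show ?thesis unfolding Tprime_iff[OF assms] Dn_def using e by blast
qed

lemma Tprime_iff2:
  assumes "lat_filter u" "lat_filter x" "lat_ideal v"
  shows "Tprime can_perp canY (can_T imp) u x v \<longleftrightarrow> v \<inter> Fg u x \<noteq> {}"
  unfolding Tprime_iff[OF assms] Fg_def by blast

end

theorem proposition4p5:
  fixes imp :: "'a::bounded_lattice \<Rightarrow> 'a \<Rightarrow> 'a"
  assumes "heyting_imp imp"
  shows "heyting_frame (canX :: 'a set set) can_perp (canY :: 'a set set) (can_T imp)"
proof -
  note TI = Tprime_iff[OF assms] and TI1 = Tprime_iff1[OF assms] and TI2 = Tprime_iff2[OF assms]
  note TT = T_iff[OF assms]
  have F0: "\<forall>x\<in>(canX::'a set set). \<forall>y\<in>canY. can_perp x y \<longleftrightarrow>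
      (\<forall>u\<in>canX. Tprime can_perp canY (can_T imp) u x y)"
  proof (intro ballI iffI)
    fix x y u :: "'a set"
    assume xy: "x \<in> canX" "y \<in> canY" "can_perp x y" "u \<in> canX"
    then obtain c where "c \<in> x" "c \<in> y" unfolding can_perp_def by blast
    moreover have "top \<in> u" using xy filt_top unfolding canX_def by blast
    moreover have "inf top c \<le> c" by simp
    ultimately show "Tprime can_perp canY (can_T imp) u x y"
      using TI[of u x y] xy unfolding canX_def canY_def by blast
  next
    fix x y :: "'a set"
    assume xy: "x \<in> canX" "y \<in> canY" "\<forall>u\<in>canX. Tprime can_perp canY (can_T imp) u x y"
    have "{b. top \<le> b} \<in> canX" using pr_filter unfolding canX_def by blast
    with xy have "Tprime can_perp canY (can_T imp) {b. top \<le> b} x y" by blast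
    then obtain c a b where "top \<le> c" "a \<in> x" "b \<in> y" "inf c a \<le> b"
      using TI[of "{b. top \<le> b}" x y] pr_filter xy unfolding canX_def canY_def by blast
    then have "a \<le> b" by (simp add: top_unique)
    then have "b \<in> x" using filt_up xy \<open>a \<in> x\<close> unfolding canX_def by blast
    then show "can_perp x y" using \<open>b \<in> y\<close> unfolding can_perp_def by blast
  qed
  have F1: "separated (canX::'a set set) can_perp canY"
    unfolding separated_def
  proof (intro conjI ballI impI)
    fix x z :: "'a set" assume "x \<in> canX" "z \<in> canX"
      "leX can_perp canY x z \<and> leX can_perp canY z x"
    then show "x = z" using leX_iff[of x z] leX_iff[of z x] unfolding canX_def by auto
  next
    fix x z :: "'a set" assume "x \<in> canY" "z \<in> canY"
      "leY canX can_perp x z \<and> leY canX can_perp z x"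
    then show "x = z" using leY_iff[of x z] leY_iff[of z x] unfolding canY_def by auto
  qed
  have F2: "\<forall>x\<in>(canX::'a set set). \<forall>v\<in>canY. \<exists>w\<in>canY.
      {y\<in>canY. can_T imp y x v} = GammaY canX can_perp canY w"
  proof (intro ballI)
    fix x v :: "'a set" assume xv: "x \<in> canX" "v \<in> canY"
    then have fx: "lat_filter x" and iv: "lat_ideal v" unfolding canX_def canY_def by auto
    show "\<exists>w\<in>canY. {y\<in>canY. can_T imp y x v} = GammaY canX can_perp canY w"
    proof (rule bexI[of _ "Dn imp x v"])
      show "Dn imp x v \<in> canY" using Dn_ideal[OF assms fx iv] unfolding canY_def by blast
      show "{y\<in>canY. can_T imp y x v} = GammaY canX can_perp canY (Dn imp x v)"
        unfolding GammaY_def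
      proof (intro Collect_cong conj_cong refl)
        fix y :: "'a set" assume "y \<in> canY"
        then show "can_T imp y x v = leY canX can_perp (Dn imp x v) y"
          using TT[OF fx iv, of y] leY_iff[of y "Dn imp x v"] unfolding canY_def by auto
      qed
    qed
  qed
  have F3: "\<forall>y\<in>(canY::'a set set). \<forall>x\<in>canX. \<forall>v\<in>canY. \<forall>x1\<in>canX. \<forall>v1\<in>canY.
        can_T imp y x v \<and> leX can_perp canY x1 x \<and> leY canX can_perp v1 v \<longrightarrow> can_T imp y x1 v1"
  proof (intro ballI impI)
    fix y x v x1 v1 :: "'a set"
    assume m: "y \<in> canY" "x \<in> canX" "v \<in> canY" "x1 \<in> canX" "v1 \<in> canY"
      and h: "can_T imp y x v \<and> leX can_perp canY x1 x \<and> leY canX can_perp v1 v"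
    then have fs: "lat_filter x" "lat_ideal v" "lat_filter x1" "lat_ideal v1"
      unfolding canX_def canY_def by auto
    have "x1 \<subseteq> x" "v1 \<subseteq> v" "Dn imp x v \<subseteq> y"
      using h leX_iff[OF fs(1)] leY_iff[OF fs(2)] TT[OF fs(1,2)] by auto
    then have "Dn imp x1 v1 \<subseteq> y" unfolding Dn_def by blast
    then show "can_T imp y x1 v1" using TT m unfolding canX_def canY_def by blast
  qed
  have F4: "\<forall>u\<in>(canX::'a set set). \<forall>x\<in>canX. \<forall>v\<in>canY.
        stable canX can_perp canY {x1\<in>canX. Tprime can_perp canY (can_T imp) u x1 v} \<and>
        costable canX can_perp canY {v1\<in>canY. Tprime can_perp canY (can_T imp) u x v1}"
  proof (intro ballI conjI)
    fix u x v :: "'a set" assume m: "u \<in> canX" "x \<in> canX" "v \<in> canY"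
    then have fu: "lat_filter u" and fx: "lat_filter x" and iv: "lat_ideal v"
      unfolding canX_def canY_def by auto
    let ?A = "{x1\<in>canX. Tprime can_perp canY (can_T imp) u x1 v}"
    have A: "?A = {x1\<in>canX. x1 \<inter> Dn imp u v \<noteq> {}}"
    proof (intro Collect_cong conj_cong refl)
      fix x1 :: "'a set" assume "x1 \<in> canX"
      then have "lat_filter x1" unfolding canX_def by simp
      then show "Tprime can_perp canY (can_T imp) u x1 v = (x1 \<inter> Dn imp u v \<noteq> {})"
        using TI1[OF fu _ iv] by simp
    qed
    have DY: "Dn imp u v \<in> canY" using Dn_ideal[OF assms fu iv] unfolding canY_def by blast
    show "stable canX can_perp canY ?A"
      unfolding stable_def A
    proof (intro conjI equalityI subsetI)
      fix z assume "z \<in> {x1 \<in> canX. x1 \<inter> Dn imp u v \<noteq> {}}"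
      then show "z \<in> perpL canX can_perp (perpR canY can_perp {x1 \<in> canX. x1 \<inter> Dn imp u v \<noteq> {}})"
        unfolding perpL_def perpR_def by auto
    next
      fix z assume z: "z \<in> perpL canX can_perp (perpR canY can_perp {x1 \<in> canX. x1 \<inter> Dn imp u v \<noteq> {}})"
      have "Dn imp u v \<in> perpR canY can_perp {x1 \<in> canX. x1 \<inter> Dn imp u v \<noteq> {}}"
        using DY unfolding perpR_def can_perp_def by auto
      with z show "z \<in> {x1 \<in> canX. x1 \<inter> Dn imp u v \<noteq> {}}"
        unfolding perpL_def can_perp_def by auto
    qed auto
    let ?B = "{v1\<in>canY. Tprime can_perp canY (can_T imp) u x v1}"
    have B: "?B = {v1\<in>canY. v1 \<inter> Fg u x \<noteq> {}}"
    proof (intro Collect_cong conj_cong refl)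
      fix v1 :: "'a set" assume "v1 \<in> canY"
      then have "lat_ideal v1" unfolding canY_def by simp
      then show "Tprime can_perp canY (can_T imp) u x v1 = (v1 \<inter> Fg u x \<noteq> {})"
        using TI2[OF fu fx] by simp
    qed
    have FX: "Fg u x \<in> canX" using Fg_filter[OF fu fx] unfolding canX_def by blast
    show "costable canX can_perp canY ?B"
      unfolding costable_def B
    proof (intro conjI equalityI subsetI)
      fix z assume "z \<in> {v1\<in>canY. v1 \<inter> Fg u x \<noteq> {}}"
      then show "z \<in> perpR canY can_perp (perpL canX can_perp {v1\<in>canY. v1 \<inter> Fg u x \<noteq> {}})"
        unfolding perpL_def perpR_def can_perp_def by auto
    next
      fix z assume z: "z \<in> perpR canY can_perp (perpL canX can_perp {v1\<in>canY. v1 \<inter> Fg u x \<noteq> {}})"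
      have "Fg u x \<in> perpL canX can_perp {v1\<in>canY. v1 \<inter> Fg u x \<noteq> {}}"
        using FX unfolding perpL_def can_perp_def by auto
      with z show "z \<in> {v1\<in>canY. v1 \<inter> Fg u x \<noteq> {}}"
        unfolding perpR_def can_perp_def by auto
    qed auto
  qed
  have HF: "\<forall>x\<in>(canX::'a set set). \<forall>z\<in>canX.
      {u\<in>canX. R111 can_perp canY (can_T imp) u x z} = {u\<in>canX. Rle can_perp canY u x z}"
  proof (intro ballI Collect_cong conj_cong refl)
    fix x z u :: "'a set" assume m: "x \<in> canX" "z \<in> canX" and "u \<in> canX"
    then have fx: "lat_filter x" and fz: "lat_filter z" and fu: "lat_filter u"
      unfolding canX_def by auto
    have "R111 can_perp canY (can_T imp) u x z \<longleftrightarrow>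
        (\<forall>v\<in>canY. v \<inter> Fg z x \<noteq> {} \<longrightarrow> u \<inter> v \<noteq> {})"
    proof -
      have eq: "\<And>v. v \<in> canY \<Longrightarrow> Tprime can_perp canY (can_T imp) z x v \<longleftrightarrow> v \<inter> Fg z x \<noteq> {}"
        using TI2[OF fz fx] unfolding canY_def by simp
      show ?thesis unfolding R111_def Rd11_def can_perp_def[of u] using eq by auto
    qed
    also have "\<dots> \<longleftrightarrow> leX can_perp canY (Fg z x) u"
      unfolding leX_def perpR_single by blast
    also have "\<dots> \<longleftrightarrow> Fg z x \<subseteq> u" using leX_iff[OF fu] .
    also have "\<dots> \<longleftrightarrow> x \<subseteq> u \<and> z \<subseteq> u"
    proof
      assume h: "Fg z x \<subseteq> u"
      have "x \<subseteq> Fg z x"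
      proof
        fix a assume "a \<in> x"
        moreover have "inf top a \<le> a" by simp
        ultimately show "a \<in> Fg z x" unfolding Fg_def using filt_top[OF fz] by blast
      qed
      moreover have "z \<subseteq> Fg z x"
      proof
        fix c assume "c \<in> z"
        moreover have "inf c top \<le> c" by simp
        ultimately show "c \<in> Fg z x" unfolding Fg_def using filt_top[OF fx] by blast
      qed
      ultimately show "x \<subseteq> u \<and> z \<subseteq> u" using h by blast
    next
      assume h: "x \<subseteq> u \<and> z \<subseteq> u"
      show "Fg z x \<subseteq> u"
      proof
        fix b assume "b \<in> Fg z x"
        then obtain c a where "c \<in> z" "a \<in> x" "inf c a \<le> b" unfolding Fg_def by blast
        then show "b \<in> u" using h filt_inf[OF fu] filt_up[OF fu] by blast
      qed
    qed
    also have "\<dots> \<longleftrightarrow> Rle can_perp canY u x z"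
      unfolding Rle_def using leX_iff[OF fu] by blast
    finally show "R111 can_perp canY (can_T imp) u x z \<longleftrightarrow> Rle can_perp canY u x z" .
  qed
  show ?thesis
    unfolding heyting_frame_def implicative_frame_def
    by (intro conjI F0 F1 F2 F3 F4 HF)
qed

end
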